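(* Let $\mathcal{N}=((V,A),\varphi)$ be a rooted $X$-cactus. Then $\mathcal{N}$ is temporal if and only if for every vertex $u\in V$ the following three properties hold: (a) if $u\in\varphi(X)$, then either $u$ is a leaf or $u$ is a parent of a reticulation vertex that is a leaf; (b) if $u$ has outdegree at least $2$, then $u$ is not the parent of a reticulation vertex that is a leaf; (c) if $u$ is the parent of a reticulation vertex $v$ in a reticulation cycle $\{P,P'\}$, then neither of the directed paths $P,P'$ consists of the single arc $(u,v)$.
   Context: Let $X$ be a finite non-empty set. A directed graph $N=(V,A)$ has a finite non-empty vertex set $V$ and arc set $A\subseteq V\times V$. It is a rooted DAG if it has no directed cycle and has a vertex $\rho$ of indegree $0$ (the root) such that every vertex is reachable from $\rho$ by a directed path. A leaf is a vertex of outdegree $0$, an internal vertex has outdegree $\ge 1$, a tree vertex has indegree $\le 1$, and a reticulation vertex has indegree $\ge 2$. If $(u,v)\in A$, then $v$ is a child of $u$ and $u$ is a parent of $v$. A reticulation cycle $\{P,P'\}$ consists of two distinct directed paths $P,P'$ with the same start vertex and the same end vertex but no other vertices in common. A rooted $X$-cactus $\mathcal{N}=(N,\varphi)$ is a rooted DAG $N=(V,A)$ together with a map $\varphi:X\to V$ such that (RC1) every vertex has indegree at most $2$; (RC2) no two distinct reticulation cycles have an arc in common; (RC3) $\varphi(X)$ contains all leaves and all tree vertices of outdegree $1$. A time-stamp function on $\mathcal{N}$ is a map $t:V\to\mathbb{R}_{\ge 0}$ with (TS1) $t(v)=0$ for all $v\in\varphi(X)$; (TS2) $t(u)>t(v)$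 for every arc $(u,v)$ such that $v$ is not a reticulation vertex; (TS3) $t(v)=t(p_1)=t(p_2)$ for every reticulation vertex $v$ with parents $p_1,p_2$. $\mathcal{N}$ is called temporal if a time-stamp function on its vertices exists. *)

theory Defs
  imports Complex_Main
begin

definition indeg :: "('v \<times> 'v) set \<Rightarrow> 'v \<Rightarrow> nat" where
  "indeg A v = card {u. (u, v) \<in> A}"

definition outdeg :: "('v \<times> 'v) set \<Rightarrow> 'v \<Rightarrow> nat" where
  "outdeg A v = card {w. (v, w) \<in> A}"

definition is_leaf :: "('v \<times> 'v) set \<Rightarrow> 'v \<Rightarrow> bool" where
  "is_leaf A v \<longleftrightarrow> outdeg A v = 0"

definition is_tree_vertex :: "('v \<times> 'v) set \<Rightarrow> 'v \<Rightarrow> bool" where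
  "is_tree_vertex A v \<longleftrightarrow> indeg A v \<le> 1"

definition is_reticulation :: "('v \<times> 'v) set \<Rightarrow> 'v \<Rightarrow> bool" where
  "is_reticulation A v \<longleftrightarrow> indeg A v \<ge> 2"

definition rooted_dag :: "'v set \<Rightarrow> ('v \<times> 'v) set \<Rightarrow> bool" where
  "rooted_dag V A \<longleftrightarrow> finite V \<and> V \<noteq> {} \<and> A \<subseteq> V \<times> V \<and> acyclic A \<and>
     (\<exists>\<rho>\<in>V. indeg A \<rho> = 0 \<and> (\<forall>v\<in>V. (\<rho>, v) \<in> A\<^sup>*))"

definition dpath :: "('v \<times> 'v) set \<Rightarrow> 'v list \<Rightarrow> bool" where
  "dpath A P \<longleftrightarrow> P \<noteq> [] \<and> distinct P \<and> successively (\<lambda>x y. (x, y) \<in> A) P"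

definition path_arcs :: "'v list \<Rightarrow> ('v \<times> 'v) set" where
  "path_arcs P = set (zip P (tl P))"

definition retic_cycle :: "('v \<times> 'v) set \<Rightarrow> 'v list \<Rightarrow> 'v list \<Rightarrow> bool" where
  "retic_cycle A P P' \<longleftrightarrow> dpath A P \<and> dpath A P' \<and> P \<noteq> P' \<and>
     hd P = hd P' \<and> last P = last P' \<and> set P \<inter> set P' = {hd P, last P}"

definition rooted_cactus :: "'x set \<Rightarrow> 'v set \<Rightarrow> ('v \<times> 'v) set \<Rightarrow> ('x \<Rightarrow> 'v) \<Rightarrow> bool" where
  "rooted_cactus X V A \<phi> \<longleftrightarrow> finite X \<and> X \<noteq> {} \<and> rooted_dag V A \<and> \<phi> ` X \<subseteq> V \<and>
     \<comment> \<open>(RC1)\<close> (\<forall>v\<in>V. indeg A v \<le> 2) \<and>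
     \<comment> \<open>(RC2)\<close> (\<forall>P1 P1' P2 P2'. retic_cycle A P1 P1' \<and> retic_cycle A P2 P2' \<and>
         {P1, P1'} \<noteq> {P2, P2'} \<longrightarrow>
         (path_arcs P1 \<union> path_arcs P1') \<inter> (path_arcs P2 \<union> path_arcs P2') = {}) \<and>
     \<comment> \<open>(RC3)\<close> (\<forall>v\<in>V. is_leaf A v \<or> (is_tree_vertex A v \<and> outdeg A v = 1) \<longrightarrow> v \<in> \<phi> ` X)"

definition time_stamp :: "'x set \<Rightarrow> 'v set \<Rightarrow> ('v \<times> 'v) set \<Rightarrow> ('x \<Rightarrow> 'v) \<Rightarrow> ('v \<Rightarrow> real) \<Rightarrow> bool" where
  "time_stamp X V A \<phi> t \<longleftrightarrow> (\<forall>v\<in>V. t v \<ge> 0) \<and>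
     \<comment> \<open>(TS1)\<close> (\<forall>v\<in>\<phi> ` X. t v = 0) \<and>
     \<comment> \<open>(TS2)\<close> (\<forall>(u, v)\<in>A. \<not> is_reticulation A v \<longrightarrow> t u > t v) \<and>
     \<comment> \<open>(TS3)\<close> (\<forall>v\<in>V. is_reticulation A v \<longrightarrow> (\<forall>p. (p, v) \<in> A \<longrightarrow> t p = t v))"

definition temporal :: "'x set \<Rightarrow> 'v set \<Rightarrow> ('v \<times> 'v) set \<Rightarrow> ('x \<Rightarrow> 'v) \<Rightarrow> bool" where
  "temporal X V A \<phi> \<longleftrightarrow> (\<exists>t. time_stamp X V A \<phi> t)"

end

theory Submission
  imports Defs
begin


lemma path_arcs_Nil[simp]: "path_arcs [] = {}" by (simp add: path_arcs_def)
lemma path_arcs_single[simp]: "path_arcs [a] = {}" by (simp add: path_arcs_def)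
lemma path_arcs_Cons2[simp]: "path_arcs (a#b#xs) = insert (a,b) (path_arcs (b#xs))"
  by (simp add: path_arcs_def)

lemma path_arcs_mid: "(a,b) \<in> path_arcs (xs @ a # b # ys)"
  by (induction xs rule: induct_list012) auto

lemma path_arcs_snoc: "Q \<noteq> [] \<Longrightarrow> (last Q, y) \<in> path_arcs (Q @ [y])"
  by (induction Q rule: induct_list012) auto

lemma path_arcs_nth: "(x,z) \<in> path_arcs P \<longleftrightarrow> (\<exists>i. Suc i < length P \<and> x = P!i \<and> z = P!Suc i)"
  unfolding path_arcs_def set_zip apply (auto simp: nth_tl)
  apply (rule_tac x=i in exI) by auto

lemma path_arcs_A: "successively (\<lambda>x y. (x,y)\<in>A) P \<Longrightarrow> path_arcs P \<subseteq> A"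
  by (induction P rule: induct_list012) auto

lemma path_arcs_not_hd: "distinct P \<Longrightarrow> (x,z) \<in> path_arcs P \<Longrightarrow> z \<noteq> hd P"
proof -
  assume d: "distinct P" and a: "(x,z) \<in> path_arcs P"
  then obtain i where i: "Suc i < length P" "z = P!Suc i" by (auto simp: path_arcs_nth)
  then have "P \<noteq> []" by auto
  then have "hd P = P!0" by (simp add: hd_conv_nth)
  moreover have "P!Suc i \<noteq> P!0" using d[unfolded distinct_conv_nth, rule_format, of "Suc i" 0] i by linarith
  ultimately show ?thesis using i by simp
qed

lemma path_arcs_len3: "(x,z) \<in> path_arcs P \<Longrightarrow> z \<noteq> last P \<Longrightarrow> length P \<ge> 3"
proof -
  assume a: "(x,z) \<in> path_arcs P" and z: "z \<noteq> last P"
  then obtain i where i: "Suc i < length P" "z = P!Suc i" by (auto simp: path_arcs_nth)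
  then have "P \<noteq> []" by auto
  then have "last P = P!(length P - 1)" by (simp add: last_conv_nth)
  with z i have "Suc i \<noteq> length P - 1" by auto
  with i show ?thesis by linarith
qed

lemma walk_reach:
  "successively (\<lambda>x y. (x,y)\<in>A) Q \<Longrightarrow> z \<in> set Q \<Longrightarrow> (hd Q, z) \<in> A\<^sup>* \<and> (z, last Q) \<in> A\<^sup>*"
proof (induction Q arbitrary: z)
  case Nil then show ?case by simp
next
  case (Cons a Q)
  show ?case
  proof (cases "Q = []")
    case True then show ?thesis using Cons.prems by simp
  next
    case False
    have ab: "(a, hd Q) \<in> A" and sb: "successively (\<lambda>x y. (x,y)\<in>A) Q"
      using Cons.prems(1) False by (simp_all add: successively_Cons)
    have IH: "\<And>z. z \<in> set Q \<Longrightarrow> (hd Q, z) \<in> A\<^sup>* \<and> (z, last Q) \<in> A\<^sup>*"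
      using Cons.IH[OF sb] by blast
    have "(hd Q, last Q) \<in> A\<^sup>*" using IH[of "last Q"] False by simp
    then have r: "(a, last Q) \<in> A\<^sup>*" by (rule converse_rtrancl_into_rtrancl[OF ab])
    show ?thesis
    proof (cases "z = a")
      case True then show ?thesis using r False by simp
    next
      case zn: False then have z: "z \<in> set Q" using Cons.prems(2) by simp
      have "(hd Q,z) \<in> A\<^sup>*" "(z, last Q) \<in> A\<^sup>*" using IH[OF z] by auto
      then show ?thesis using converse_rtrancl_into_rtrancl[OF ab] False by simp
    qed
  qed
qed

lemma retic_cycle_sym: "retic_cycle A P P' \<Longrightarrow> retic_cycle A P' P"
  unfolding retic_cycle_def by (metis Int_commute)

locale cac =
  fixes X :: "'x set" and V :: "'v set" and A :: "('v \<times> 'v) set" and \<phi> :: "'x \<Rightarrow> 'v"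
  assumes rc: "rooted_cactus X V A \<phi>"
begin

lemma finV: "finite V" and AV: "A \<subseteq> V \<times> V" and acyc: "acyclic A"
  using rc by (auto simp: rooted_cactus_def rooted_dag_def)

lemma finA: "finite A" using finV AV finite_subset by blast

lemma root: "\<exists>\<rho>\<in>V. indeg A \<rho> = 0 \<and> (\<forall>v\<in>V. (\<rho>, v) \<in> A\<^sup>*)"
  using rc by (auto simp: rooted_cactus_def rooted_dag_def)

lemma rc2: "retic_cycle A P1 P1' \<Longrightarrow> retic_cycle A P2 P2' \<Longrightarrow> {P1, P1'} \<noteq> {P2, P2'} \<Longrightarrow>
         (path_arcs P1 \<union> path_arcs P1') \<inter> (path_arcs P2 \<union> path_arcs P2') = {}"
proof -
  assume a: "retic_cycle A P1 P1'" "retic_cycle A P2 P2'" "{P1, P1'} \<noteq> {P2, P2'}"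
  from rc have H: "\<forall>P1 P1' P2 P2'. retic_cycle A P1 P1' \<and> retic_cycle A P2 P2' \<and>
         {P1, P1'} \<noteq> {P2, P2'} \<longrightarrow>
         (path_arcs P1 \<union> path_arcs P1') \<inter> (path_arcs P2 \<union> path_arcs P2') = {}"
    unfolding rooted_cactus_def by (elim conjE) assumption
  show ?thesis using H[rule_format, OF conjI[OF a(1) conjI[OF a(2) a(3)]]] .
qed

lemma shared_last:
  assumes "retic_cycle A P1 P1'" "retic_cycle A P2 P2'"
    "e \<in> path_arcs P1 \<union> path_arcs P1'" "e \<in> path_arcs P2 \<union> path_arcs P2'"
  shows "last P1 = last P2"
proof -
  have "{P1, P1'} = {P2, P2'}" using rc2[OF assms(1,2)] assms(3,4) by blast
  then have "P2 \<in> {P1, P1'}" by blast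
  then have "P2 = P1 \<or> P2 = P1'" by blast
  then show ?thesis using assms(1) unfolding retic_cycle_def by auto
qed

lemma no_self: "(a,b) \<in> A\<^sup>* \<Longrightarrow> (b,a) \<in> A \<Longrightarrow> False"
proof -
  assume "(a,b) \<in> A\<^sup>*" "(b,a) \<in> A"
  then have "(a,a) \<in> A\<^sup>+" by (rule rtrancl_into_trancl1)
  then show False using acyc by (simp add: acyclic_def)
qed

lemma path_exists: "(a,b) \<in> A\<^sup>* \<Longrightarrow> \<exists>Q. dpath A Q \<and> hd Q = a \<and> last Q = b"
proof (induction rule: rtrancl_induct)
  case base then show ?case by (intro exI[of _ "[a]"]) (simp add: dpath_def)
next
  case (step b c)
  then obtain Q where Q: "dpath A Q" "hd Q = a" "last Q = b" by blast
  have "c \<notin> set Q"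
  proof
    assume "c \<in> set Q"
    then have "(c, b) \<in> A\<^sup>*" using walk_reach[where Q=Q and z=c] Q by (auto simp: dpath_def)
    then show False using no_self step by blast
  qed
  then have "dpath A (Q @ [c])" using Q step unfolding dpath_def
    by (auto simp: successively_append_iff)
  then show ?case using Q by (intro exI[of _ "Q@[c]"]) (auto simp: dpath_def)
qed

lemma other_parent: "is_reticulation A v \<Longrightarrow> (p,v) \<in> A \<Longrightarrow> \<exists>p'. p' \<noteq> p \<and> (p',v) \<in> A"
proof (rule ccontr)
  assume r: "is_reticulation A v" and "(p,v) \<in> A" and n: "\<not> (\<exists>p'. p' \<noteq> p \<and> (p',v) \<in> A)"
  then have "{u. (u,v) \<in> A} \<subseteq> {p}" by auto
  then have "card {u. (u,v) \<in> A} \<le> card {p}" by (rule card_mono[rotated]) simp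
  then have "card {u. (u,v) \<in> A} \<le> 1" by simp
  with r show False by (simp add: is_reticulation_def indeg_def)
qed

lemma unique_parent: "\<not> is_reticulation A y \<Longrightarrow> (x,y) \<in> A \<Longrightarrow> (x',y) \<in> A \<Longrightarrow> x = x'"
proof -
  assume r: "\<not> is_reticulation A y" and a: "(x,y) \<in> A" "(x',y) \<in> A"
  have f: "finite {u. (u,y) \<in> A}"
  proof (rule finite_subset[of _ "fst ` A"])
    show "{u. (u,y) \<in> A} \<subseteq> fst ` A" by force
  qed (simp add: finA)
  have "card {u. (u,y) \<in> A} \<le> Suc 0" using r by (simp add: is_reticulation_def indeg_def)
  then show ?thesis using card_le_Suc0_iff_eq[OF f] a by auto
qed

end



context cac begin

lemma arcV: "(x,y) \<in> A \<Longrightarrow> x \<in> V \<and> y \<in> V" using AV by auto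

lemma cycle_exists:
  assumes p1: "(p1,v) \<in> A" and p2: "(p2,v) \<in> A" and ne: "p1 \<noteq> p2"
  shows "\<exists>Q1 Q2. retic_cycle A (Q1@[v]) (Q2@[v]) \<and> Q1 \<noteq> [] \<and> Q2 \<noteq> [] \<and>
           last Q1 = p1 \<and> last Q2 = p2 \<and> hd Q1 = hd Q2"
proof -
  define CA where "CA = {s. (s,p1) \<in> A\<^sup>* \<and> (s,p2) \<in> A\<^sup>*}"
  obtain \<rho> where \<rho>: "\<rho> \<in> V" "\<forall>v\<in>V. (\<rho>, v) \<in> A\<^sup>*" using root by blast
  have "\<rho> \<in> CA" using \<rho> arcV p1 p2 by (auto simp: CA_def)
  have wf: "wf ((A\<inverse>)\<^sup>+)"
    by (rule wf_trancl, rule finite_acyclic_wf_converse[OF finA acyc])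
  obtain s where s: "s \<in> CA" and smin: "\<And>y. (y,s) \<in> (A\<inverse>)\<^sup>+ \<Longrightarrow> y \<notin> CA"
    using wf_eq_minimal[THEN iffD1, OF wf, rule_format, of \<rho> CA] \<open>\<rho> \<in> CA\<close> by blast
  have smin': "\<And>y. (s,y) \<in> A\<^sup>+ \<Longrightarrow> y \<notin> CA"
    using smin by (simp add: trancl_converse)
  obtain Q1 where Q1: "dpath A Q1" "hd Q1 = s" "last Q1 = p1"
    using path_exists s by (auto simp: CA_def)
  obtain Q2 where Q2: "dpath A Q2" "hd Q2 = s" "last Q2 = p2"
    using path_exists s by (auto simp: CA_def)
  have w1: "successively (\<lambda>x y. (x,y)\<in>A) Q1" and w2: "successively (\<lambda>x y. (x,y)\<in>A) Q2"
    using Q1 Q2 by (auto simp: dpath_def)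
  have inter: "set Q1 \<inter> set Q2 = {s}"
  proof
    show "set Q1 \<inter> set Q2 \<subseteq> {s}"
    proof
      fix z assume z: "z \<in> set Q1 \<inter> set Q2"
      then have "(s,z) \<in> A\<^sup>*" "(z,p1) \<in> A\<^sup>*" "(z,p2) \<in> A\<^sup>*"
        using walk_reach[OF w1, of z] walk_reach[OF w2, of z] Q1 Q2 by auto
      then show "z \<in> {s}" using smin' by (auto simp: CA_def rtrancl_eq_or_trancl)
    qed
  next
    have "Q1 \<noteq> []" "Q2 \<noteq> []" using Q1 Q2 by (auto simp: dpath_def)
    then show "{s} \<subseteq> set Q1 \<inter> set Q2" using hd_in_set[of Q1] hd_in_set[of Q2] Q1(2) Q2(2) by auto
  qed
  have v1: "v \<notin> set Q1"
  proof
    assume "v \<in> set Q1" then have "(v,p1) \<in> A\<^sup>*" using walk_reach[OF w1, of v] Q1 by auto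
    then show False using no_self p1 by blast
  qed
  have v2: "v \<notin> set Q2"
  proof
    assume "v \<in> set Q2" then have "(v,p2) \<in> A\<^sup>*" using walk_reach[OF w2, of v] Q2 by auto
    then show False using no_self p2 by blast
  qed
  have ne1: "Q1 \<noteq> []" and ne2: "Q2 \<noteq> []" using Q1 Q2 by (auto simp: dpath_def)
  have d1: "dpath A (Q1@[v])" using Q1 v1 p1 ne1 by (auto simp: dpath_def successively_append_iff)
  have d2: "dpath A (Q2@[v])" using Q2 v2 p2 ne2 by (auto simp: dpath_def successively_append_iff)
  have neq: "Q1@[v] \<noteq> Q2@[v]" using Q1 Q2 ne by auto
  have "set (Q1@[v]) \<inter> set (Q2@[v]) = {hd (Q1@[v]), last (Q1@[v])}"
    using inter v1 v2 ne1 Q1 by auto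
  then have "retic_cycle A (Q1@[v]) (Q2@[v])"
    using d1 d2 neq ne1 ne2 Q1 Q2 by (auto simp: retic_cycle_def)
  then show ?thesis using ne1 ne2 Q1 Q2 by (intro exI[of _ Q1] exI[of _ Q2]) simp
qed

lemma NR:
  assumes cyc: "retic_cycle A P P'" and xy: "(x,y) \<in> path_arcs P" and yl: "y \<noteq> last P"
  shows "\<not> is_reticulation A y"
proof
  assume r: "is_reticulation A y"
  have "(x,y) \<in> A" using cyc xy path_arcs_A[of A P] by (auto simp: retic_cycle_def dpath_def)
  moreover obtain x' where "x' \<noteq> x" "(x',y) \<in> A" using other_parent[OF r calculation] by blast
  ultimately obtain Q1 Q2 where c: "retic_cycle A (Q1@[y]) (Q2@[y])" "Q1 \<noteq> []" "last Q1 = x"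
    using cycle_exists[of x y x'] by blast
  have "(x,y) \<in> path_arcs (Q1@[y])" using path_arcs_snoc[OF c(2)] c(3) by simp
  then have "last P = last (Q1@[y])" using shared_last[OF cyc c(1)] xy by blast
  then show False using yl by simp
qed

end

definition condc :: "('v \<times> 'v) set \<Rightarrow> bool" where
  "condc A \<longleftrightarrow> (\<forall>u v P P'. (u, v) \<in> A \<and> is_reticulation A v \<and> retic_cycle A P P' \<and>
         v \<in> set P \<union> set P' \<longrightarrow> P \<noteq> [u, v] \<and> P' \<noteq> [u, v])"

context cac begin

lemma side_long:
  assumes c: "condc A" and cyc: "retic_cycle A (Q@[v]) P'" and r: "is_reticulation A v"
    and pv: "(p,v) \<in> A" and ne: "Q \<noteq> []" and l: "last Q = p"
  shows "\<exists>Q0 q. Q = Q0 @ [q, p]"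
proof -
  have "Q@[v] \<noteq> [p,v]" using c cyc r pv unfolding condc_def by auto
  then have "Q \<noteq> [p]" by auto
  have Q: "Q = butlast Q @ [p]" using ne l by (metis append_butlast_last_id)
  then have "butlast Q \<noteq> []" using \<open>Q \<noteq> [p]\<close> by (metis append_Nil)
  then have "butlast Q = butlast (butlast Q) @ [last (butlast Q)]" by simp
  then have "Q = butlast (butlast Q) @ [last (butlast Q), p]" using Q by (metis append.assoc append_Cons append_Nil)
  then show ?thesis by blast
qed

lemma S1:
  assumes c: "condc A" and r: "is_reticulation A v" and pv: "(p,v) \<in> A"
  shows "\<not> is_reticulation A p"
proof -
  obtain p' where "p' \<noteq> p" "(p',v) \<in> A" using other_parent[OF r pv] by blast
  then obtain Q1 Q2 where cy: "retic_cycle A (Q1@[v]) (Q2@[v])" "Q1 \<noteq> []" "last Q1 = p"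
    using cycle_exists[of p v p'] pv by metis
  obtain Q0 q where Q: "Q1 = Q0 @ [q,p]" using side_long[OF c cy(1) r pv cy(2,3)] by blast
  have "(q,p) \<in> path_arcs (Q1@[v])" using Q path_arcs_mid[of q p Q0 "[v]"] by simp
  moreover have "p \<noteq> v" using pv acyc by (auto simp: acyclic_def)
  ultimately show ?thesis using NR[OF cy(1)] by simp
qed

lemma S2:
  assumes c: "condc A" and rv: "is_reticulation A v" and rw: "is_reticulation A w"
    and xv: "(x,v) \<in> A" and xw: "(x,w) \<in> A"
  shows "v = w"
proof -
  obtain p' where "p' \<noteq> x" "(p',v) \<in> A" using other_parent[OF rv xv] by blast
  then obtain Q1 Q2 where cy: "retic_cycle A (Q1@[v]) (Q2@[v])" "Q1 \<noteq> []" "last Q1 = x"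
    using cycle_exists[of x v p'] xv by metis
  obtain Q0 q where Q: "Q1 = Q0 @ [q,x]" using side_long[OF c cy(1) rv xv cy(2,3)] by blast
  have a1: "(q,x) \<in> path_arcs (Q1@[v])" using Q path_arcs_mid[of q x Q0 "[v]"] by simp
  obtain p'' where "p'' \<noteq> x" "(p'',w) \<in> A" using other_parent[OF rw xw] by blast
  then obtain R1 R2 where cy': "retic_cycle A (R1@[w]) (R2@[w])" "R1 \<noteq> []" "last R1 = x"
    using cycle_exists[of x w p''] xw by metis
  obtain R0 q' where R: "R1 = R0 @ [q',x]" using side_long[OF c cy'(1) rw xw cy'(2,3)] by blast
  have a2: "(q',x) \<in> path_arcs (R1@[w])" using R path_arcs_mid[of q' x R0 "[w]"] by simp
  have "(q,x) \<in> A" "(q',x) \<in> A"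
    using a1 a2 cy(1) cy'(1) path_arcs_A[of A "Q1@[v]"] path_arcs_A[of A "R1@[w]"]
    by (auto simp: retic_cycle_def dpath_def)
  then have "q = q'" using unique_parent S1[OF c rv xv] by blast
  then show ?thesis using shared_last[OF cy(1) cy'(1)] a1 a2 by auto
qed

end



context cac begin

definition rho where "rho = (SOME r. r \<in> V \<and> indeg A r = 0 \<and> (\<forall>v\<in>V. (r, v) \<in> A\<^sup>*))"

lemma rho: "rho \<in> V" "indeg A rho = 0" "\<And>v. v \<in> V \<Longrightarrow> (rho, v) \<in> A\<^sup>*"
proof -
  have "\<exists>r. r \<in> V \<and> indeg A r = 0 \<and> (\<forall>v\<in>V. (r, v) \<in> A\<^sup>*)" using root by blast
  then have "rho \<in> V \<and> indeg A rho = 0 \<and> (\<forall>v\<in>V. (rho, v) \<in> A\<^sup>*)"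
    unfolding rho_def by (rule someI_ex)
  then show "rho \<in> V" "indeg A rho = 0" "\<And>v. v \<in> V \<Longrightarrow> (rho, v) \<in> A\<^sup>*" by auto
qed

lemma fin_parents: "finite {u. (u,y) \<in> A}"
proof (rule finite_subset[of _ "fst ` A"])
  show "{u. (u,y) \<in> A} \<subseteq> fst ` A" by force
qed (simp add: finA)

lemma fin_children: "finite {w. (x,w) \<in> A}"
proof (rule finite_subset[of _ "snd ` A"])
  show "{w. (x,w) \<in> A} \<subseteq> snd ` A" by force
qed (simp add: finA)

lemma rho_noparent: "(x, rho) \<notin> A"
proof
  assume "(x, rho) \<in> A"
  then have "{u. (u,rho) \<in> A} \<noteq> {}" by blast
  then have "card {u. (u,rho) \<in> A} \<noteq> 0" using fin_parents by simp
  then show False using rho(2) by (simp add: indeg_def)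
qed

definition delta :: "'v \<times> 'v \<Rightarrow> real" where
  "delta e = (if \<exists>Q Q'. retic_cycle A Q Q' \<and> e \<in> path_arcs Q \<and> snd e \<noteq> last Q
     then 1 / real (length (SOME Q. \<exists>Q'. retic_cycle A Q Q' \<and> e \<in> path_arcs Q \<and> snd e \<noteq> last Q) - 2)
     else 1)"

lemma delta_pos: "delta e > 0"
proof (cases "\<exists>Q Q'. retic_cycle A Q Q' \<and> e \<in> path_arcs Q \<and> snd e \<noteq> last Q")
  case True
  define Q where "Q = (SOME Q. \<exists>Q'. retic_cycle A Q Q' \<and> e \<in> path_arcs Q \<and> snd e \<noteq> last Q)"
  have "\<exists>Q'. retic_cycle A Q Q' \<and> e \<in> path_arcs Q \<and> snd e \<noteq> last Q"
    unfolding Q_def using True by (rule someI_ex[where P="\<lambda>Q. \<exists>Q'. retic_cycle A Q Q' \<and> e \<in> path_arcs Q \<and> snd e \<noteq> last Q"])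
  then have "length Q \<ge> 3" using path_arcs_len3[of "fst e" "snd e" Q] by auto
  have "delta e = 1 / real (length Q - 2)" unfolding delta_def Q_def by (simp only: if_P[OF True])
  then show ?thesis using \<open>length Q \<ge> 3\<close> by simp
next
  case False then show ?thesis unfolding delta_def by (simp only: if_not_P[OF False]) simp
qed

lemma side_unique:
  assumes P: "retic_cycle A P P'" "(x,z) \<in> path_arcs P" "z \<noteq> last P"
    and Q: "retic_cycle A Q Q'" "(x,z) \<in> path_arcs Q" "z \<noteq> last Q"
  shows "Q = P"
proof (rule ccontr)
  assume ne: "Q \<noteq> P"
  have "{P, P'} = {Q, Q'}" using rc2[OF P(1) Q(1)] P(2) Q(2) by blast
  then have "Q \<in> {P, P'}" by blast
  with ne have QP: "Q = P'" by blast
  have "z \<in> set P" using P(2) by (auto simp: path_arcs_nth)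
  moreover have "z \<in> set P'" using Q(2) QP by (auto simp: path_arcs_nth)
  ultimately have "z \<in> {hd P, last P}" using P(1) unfolding retic_cycle_def by blast
  moreover have "z \<noteq> hd P" using P(1,2) path_arcs_not_hd[of P x z] by (simp add: retic_cycle_def dpath_def)
  ultimately show False using P(3) by blast
qed

lemma delta_eq:
  assumes P: "retic_cycle A P P'" "(x,z) \<in> path_arcs P" "z \<noteq> last P"
  shows "delta (x,z) = 1 / real (length P - 2)"
proof -
  have ex: "\<exists>Q Q'. retic_cycle A Q Q' \<and> (x,z) \<in> path_arcs Q \<and> snd (x,z) \<noteq> last Q"
    using P by auto
  define Q where "Q = (SOME Q. \<exists>Q'. retic_cycle A Q Q' \<and> (x,z) \<in> path_arcs Q \<and> snd (x,z) \<noteq> last Q)"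
  have "\<exists>Q'. retic_cycle A Q Q' \<and> (x,z) \<in> path_arcs Q \<and> snd (x,z) \<noteq> last Q"
    unfolding Q_def using ex by (rule someI_ex[where P="\<lambda>Q. \<exists>Q'. retic_cycle A Q Q' \<and> (x,z) \<in> path_arcs Q \<and> snd (x,z) \<noteq> last Q"])
  then have "Q = P" using side_unique[OF P] by auto
  then show ?thesis using ex unfolding delta_def Q_def by simp
qed

definition wt :: "'v \<times> 'v \<Rightarrow> real" where
  "wt e = (if is_reticulation A (snd e) then 0 else delta e)"

definition wlen :: "'v list \<Rightarrow> real" where
  "wlen Q = sum_list (map wt (zip Q (tl Q)))"

lemma zip_snoc: "Q \<noteq> [] \<Longrightarrow> zip (Q@[y]) (tl (Q@[y])) = zip Q (tl Q) @ [(last Q, y)]"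
  by (induction Q rule: induct_list012) auto

lemma wlen_snoc: assumes ne: "Q \<noteq> []" shows "wlen (Q@[y]) = wlen Q + wt (last Q, y)"
  unfolding wlen_def zip_snoc[OF ne] by simp

definition RP where "RP y = {Q. dpath A Q \<and> hd Q = rho \<and> last Q = y}"

definition tau where "tau y = Max (wlen ` RP y)"

lemma RP_fin: "finite (RP y)"
proof (rule finite_subset[of _ "{xs. set xs \<subseteq> V \<and> length xs \<le> card V}"])
  show "RP y \<subseteq> {xs. set xs \<subseteq> V \<and> length xs \<le> card V}"
  proof
    fix Q assume "Q \<in> RP y"
    then have Q: "dpath A Q" "hd Q = rho" by (auto simp: RP_def)
    have sV: "set Q \<subseteq> V"
    proof
      fix z assume "z \<in> set Q"
      then have "(rho, z) \<in> A\<^sup>*" using walk_reach[of A Q z] Q by (auto simp: dpath_def)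
      then show "z \<in> V"
      proof (cases rule: rtrancl.cases)
        case rtrancl_refl then show ?thesis using rho by simp
      next
        case (rtrancl_into_rtrancl b) then show ?thesis using AV by auto
      qed
    qed
    have "length Q = card (set Q)" using Q by (simp add: dpath_def distinct_card)
    also have "\<dots> \<le> card V" using sV finV by (rule card_mono[rotated])
    finally show "Q \<in> {xs. set xs \<subseteq> V \<and> length xs \<le> card V}" using sV by simp
  qed
qed (rule finite_lists_length_le[OF finV])

lemma RP_ne: "y \<in> V \<Longrightarrow> RP y \<noteq> {}"
  using path_exists[OF rho(3)] by (auto simp: RP_def)

lemma tau_in: "y \<in> V \<Longrightarrow> \<exists>Q\<in>RP y. wlen Q = tau y"
proof -
  assume "y \<in> V"
  then have "tau y \<in> wlen ` RP y" unfolding tau_def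
    using RP_fin RP_ne by (intro Max_in) auto
  then show ?thesis by auto
qed

lemma tau_ge_path: "Q \<in> RP y \<Longrightarrow> wlen Q \<le> tau y"
  unfolding tau_def using RP_fin by (intro Max_ge) auto

lemma tau_ge: assumes xy: "(x,y) \<in> A" shows "tau x + wt (x,y) \<le> tau y"
proof -
  have "x \<in> V" using xy AV by auto
  then obtain Q where Q: "Q \<in> RP x" "wlen Q = tau x" using tau_in by blast
  then have Qp: "dpath A Q" "hd Q = rho" "last Q = x" by (auto simp: RP_def)
  have "y \<notin> set Q"
  proof
    assume "y \<in> set Q"
    then have "(y, x) \<in> A\<^sup>*" using walk_reach[of A Q y] Qp by (auto simp: dpath_def)
    then show False using no_self xy by blast
  qed
  then have "dpath A (Q@[y])" using Qp xy by (auto simp: dpath_def successively_append_iff)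
  then have "Q@[y] \<in> RP y" using Qp by (auto simp: RP_def dpath_def)
  then have "wlen (Q@[y]) \<le> tau y" by (rule tau_ge_path)
  moreover have "wlen (Q@[y]) = tau x + wt (x,y)" using wlen_snoc[of Q y] Q Qp by (auto simp: dpath_def)
  ultimately show ?thesis by simp
qed

lemma tau_le: assumes y: "y \<in> V" "y \<noteq> rho" shows "\<exists>x. (x,y) \<in> A \<and> tau y \<le> tau x + wt (x,y)"
proof -
  obtain Q where Q: "Q \<in> RP y" "wlen Q = tau y" using tau_in y by blast
  then have Qp: "dpath A Q" "hd Q = rho" "last Q = y" by (auto simp: RP_def)
  have ne: "Q \<noteq> []" using Qp by (simp add: dpath_def)
  define Q0 where "Q0 = butlast Q"
  have QQ: "Q = Q0 @ [y]" using ne Qp unfolding Q0_def by (metis append_butlast_last_id)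
  have ne0: "Q0 \<noteq> []" using QQ Qp y by auto
  have d0: "dpath A Q0" and a: "(last Q0, y) \<in> A"
    using Qp ne0 QQ by (auto simp: dpath_def successively_append_iff)
  have h0: "hd Q0 = rho" using Qp QQ ne0 by simp
  have "Q0 \<in> RP (last Q0)" using d0 h0 by (simp add: RP_def)
  then have "wlen Q0 \<le> tau (last Q0)" by (rule tau_ge_path)
  moreover have "wlen Q = wlen Q0 + wt (last Q0, y)" using QQ wlen_snoc[OF ne0] by simp
  ultimately show ?thesis using Q a by (intro exI[of _ "last Q0"]) simp
qed

lemma tau_tree: assumes xz: "(x,z) \<in> A" and nr: "\<not> is_reticulation A z"
  shows "tau z = tau x + delta (x,z)"
proof -
  have z: "z \<in> V" "z \<noteq> rho" using xz AV rho_noparent by auto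
  obtain x' where x': "(x',z) \<in> A" "tau z \<le> tau x' + wt (x',z)" using tau_le[OF z] by blast
  have "x' = x" using unique_parent[OF nr x'(1) xz] .
  then show ?thesis using x' tau_ge[OF xz] nr by (simp add: wt_def)
qed

lemma tau_retic: assumes pv: "(p,v) \<in> A" and r: "is_reticulation A v"
  and eq: "\<And>p'. (p',v) \<in> A \<Longrightarrow> tau p' = tau p"
  shows "tau v = tau p"
proof -
  have z: "v \<in> V" "v \<noteq> rho" using pv AV rho_noparent by auto
  obtain x' where x': "(x',v) \<in> A" "tau v \<le> tau x' + wt (x',v)" using tau_le[OF z] by blast
  then show ?thesis using eq[OF x'(1)] tau_ge[OF pv] r by (simp add: wt_def)
qed

lemma tau_prefix:
  assumes cyc: "retic_cycle A P P'"
  shows "P = R @ rest \<Longrightarrow> rest \<noteq> [] \<Longrightarrow> R \<noteq> [] \<Longrightarrow>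
    tau (last R) = tau (hd P) + real (length R - 1) / real (length P - 2)"
proof (induction R arbitrary: rest rule: rev_induct)
  case Nil then show ?case by simp
next
  case (snoc z R')
  show ?case
  proof (cases "R' = []")
    case True then show ?thesis using snoc.prems by simp
  next
    case False
    have P2: "P = R' @ (z # rest)" using snoc.prems by simp
    have IH: "tau (last R') = tau (hd P) + real (length R' - 1) / real (length P - 2)"
      using snoc.IH[OF P2 _ False] by simp
    have P3: "P = butlast R' @ last R' # z # rest" using P2 False by (metis append.assoc append_Cons append_Nil append_butlast_last_id)
    have arc: "(last R', z) \<in> path_arcs P" using path_arcs_mid[of "last R'" z "butlast R'" rest] P3 by simp
    have dP: "distinct P" using cyc by (simp add: retic_cycle_def dpath_def)
    have "last P \<in> set rest" using P2 snoc.prems(2) by simp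
    moreover have "z \<notin> set rest" using dP P2 by simp
    ultimately have zl: "z \<noteq> last P" by blast
    have nr: "\<not> is_reticulation A z" using NR[OF cyc arc zl] .
    have "(last R', z) \<in> A" using arc cyc path_arcs_A[of A P] by (auto simp: retic_cycle_def dpath_def)
    then have "tau z = tau (last R') + delta (last R', z)" using tau_tree nr by blast
    also have "delta (last R', z) = 1 / real (length P - 2)" using delta_eq[OF cyc arc zl] .
    finally have "tau z = tau (hd P) + (real (length R' - 1) + 1) / real (length P - 2)"
      using IH by (simp add: add_divide_distrib)
    moreover have "real (length R' - 1) + 1 = real (length (R' @ [z]) - 1)"
      using False by (cases R') auto
    ultimately show ?thesis by simp
  qed
qed

lemma tau_coparents:
  assumes c: "condc A" and p1: "(p1,v) \<in> A" and p2: "(p2,v) \<in> A" and r: "is_reticulation A v"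
  shows "tau p1 = tau p2"
proof (cases "p1 = p2")
  case False
  then obtain Q1 Q2 where cy: "retic_cycle A (Q1@[v]) (Q2@[v])" "Q1 \<noteq> []" "Q2 \<noteq> []"
      "last Q1 = p1" "last Q2 = p2" "hd Q1 = hd Q2"
    using cycle_exists[OF p1 p2] by blast
  have cy2: "retic_cycle A (Q2@[v]) (Q1@[v])" using retic_cycle_sym[OF cy(1)] .
  obtain Q0 q where "Q1 = Q0 @ [q, p1]" using side_long[OF c cy(1) r p1 cy(2,4)] by blast
  then have l1: "length Q1 \<ge> 2" by simp
  obtain R0 q' where "Q2 = R0 @ [q', p2]" using side_long[OF c cy2 r p2 cy(3,5)] by blast
  then have l2: "length Q2 \<ge> 2" by simp
  have t1: "tau p1 = tau (hd Q1) + 1"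
    using tau_prefix[OF cy(1), of Q1 "[v]"] cy(2,4) l1 by simp
  have t2: "tau p2 = tau (hd Q2) + 1"
    using tau_prefix[OF cy2, of Q2 "[v]"] cy(3,5) l2 by simp
  show ?thesis using t1 t2 cy(6) by simp
qed simp

end



context cac begin

lemma phiV: "\<phi> ` X \<subseteq> V" using rc by (simp add: rooted_cactus_def)

lemma leaf_lab: "v \<in> V \<Longrightarrow> is_leaf A v \<Longrightarrow> v \<in> \<phi> ` X"
proof -
  assume "v \<in> V" "is_leaf A v"
  moreover from rc have "\<forall>v\<in>V. is_leaf A v \<or> (is_tree_vertex A v \<and> outdeg A v = 1) \<longrightarrow> v \<in> \<phi> ` X"
    unfolding rooted_cactus_def by (elim conjE) assumption
  ultimately show ?thesis by blast
qed

lemma leaf_iff: "is_leaf A x \<longleftrightarrow> (\<forall>w. (x,w) \<notin> A)"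
  using fin_children[of x] by (auto simp: is_leaf_def outdeg_def)

lemma outdeg2: "(x,y) \<in> A \<Longrightarrow> (x,w) \<in> A \<Longrightarrow> y \<noteq> w \<Longrightarrow> outdeg A x \<ge> 2"
proof -
  assume a: "(x,y) \<in> A" "(x,w) \<in> A" "y \<noteq> w"
  have "card {y, w} \<le> card {w. (x,w) \<in> A}" using a fin_children by (intro card_mono) auto
  then show ?thesis using a(3) by (simp add: outdeg_def)
qed

lemma outdeg2_other: "outdeg A x \<ge> 2 \<Longrightarrow> \<exists>w. w \<noteq> y \<and> (x,w) \<in> A"
proof (rule ccontr)
  assume o: "outdeg A x \<ge> 2" and n: "\<not> (\<exists>w. w \<noteq> y \<and> (x,w) \<in> A)"
  then have "{w. (x,w) \<in> A} \<subseteq> {y}" by auto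
  then have "card {w. (x,w) \<in> A} \<le> card {y}" by (rule card_mono[rotated]) simp
  with o show False by (simp add: outdeg_def)
qed

lemma reverse:
  assumes c: "condc A"
    and ca: "\<And>u. u \<in> V \<Longrightarrow> u \<in> \<phi> ` X \<Longrightarrow>
         is_leaf A u \<or> (\<exists>v. (u, v) \<in> A \<and> is_reticulation A v \<and> is_leaf A v)"
    and cb: "\<And>u. u \<in> V \<Longrightarrow> outdeg A u \<ge> 2 \<Longrightarrow>
         \<not> (\<exists>v. (u, v) \<in> A \<and> is_reticulation A v \<and> is_leaf A v)"
  shows "temporal X V A \<phi>"
proof -
  define Z where "Z = {x. is_leaf A x \<or> (\<exists>w. (x,w) \<in> A \<and> is_reticulation A w \<and> is_leaf A w)}"
  define M where "M = Max (tau ` V) + 1"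
  define t where "t x = (if x \<in> Z then 0 else M - tau x)" for x
  have Mt: "\<And>x. x \<in> V \<Longrightarrow> M - tau x \<ge> 1"
    unfolding M_def using finV by (simp add: Max_ge)
  have nZ: "x \<notin> Z" if xy: "(x,y) \<in> A" and nr: "\<not> is_reticulation A y" for x y
  proof
    assume "x \<in> Z"
    moreover have "\<not> is_leaf A x" using xy leaf_iff by blast
    ultimately obtain w where w: "(x,w) \<in> A" "is_reticulation A w" "is_leaf A w" by (auto simp: Z_def)
    have "w \<noteq> y" using w nr by auto
    then have "outdeg A x \<ge> 2" using outdeg2[OF xy w(1)] by simp
    then show False using cb[of x] w xy AV by auto
  qed
  have "time_stamp X V A \<phi> t"
    unfolding time_stamp_def
  proof (intro conjI ballI allI impI)
    fix v assume "v \<in> V" then show "t v \<ge> 0" using Mt[of v] by (simp add: t_def)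
  next
    fix v assume "v \<in> \<phi> ` X"
    then have "v \<in> V" using phiV by auto
    then have "v \<in> Z" using ca \<open>v \<in> \<phi> ` X\<close> by (simp add: Z_def)
    then show "t v = 0" by (simp add: t_def)
  next
    fix e assume e: "e \<in> A"
    obtain x y where xy: "e = (x,y)" by (cases e)
    show "case e of (u, v) \<Rightarrow> \<not> is_reticulation A v \<longrightarrow> t v < t u"
      unfolding xy
    proof (simp, intro impI)
      assume nr: "\<not> is_reticulation A y"
      have a: "(x,y) \<in> A" using e xy by simp
      have xV: "x \<in> V" "y \<in> V" using a AV by auto
      have tx: "t x = M - tau x" using nZ[OF a nr] by (simp add: t_def)
      have "tau y = tau x + delta (x,y)" using tau_tree[OF a nr] .
      then have "tau y > tau x" using delta_pos[of "(x,y)"] by simp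
      then show "t y < t x" using tx Mt[OF xV(1)] by (simp add: t_def)
    qed
  next
    fix v p assume vV: "v \<in> V" and r: "is_reticulation A v" and pv: "(p,v) \<in> A"
    show "t p = t v"
    proof (cases "is_leaf A v")
      case True
      then have "v \<in> Z" "p \<in> Z" using pv r by (auto simp: Z_def)
      then show ?thesis by (simp add: t_def)
    next
      case False
      have vZ: "v \<notin> Z"
      proof
        assume "v \<in> Z"
        then obtain w where "(v,w) \<in> A" "is_reticulation A w" using False by (auto simp: Z_def)
        then show False using S1[OF c] r by blast
      qed
      have pZ: "p \<notin> Z"
      proof
        assume "p \<in> Z"
        moreover have "\<not> is_leaf A p" using pv leaf_iff by blast
        ultimately obtain w where w: "(p,w) \<in> A" "is_reticulation A w" "is_leaf A w" by (auto simp: Z_def)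
        then have "w = v" using S2[OF c w(2) r w(1) pv] by simp
        then show False using w False by simp
      qed
      have "tau v = tau p" using tau_retic[OF pv r] tau_coparents[OF c _ pv r] by blast
      then show ?thesis using vZ pZ by (simp add: t_def)
    qed
  qed
  then show ?thesis by (auto simp: temporal_def)
qed

lemma ts_facts:
  assumes ts: "time_stamp X V A \<phi> t"
  shows "\<And>v. v \<in> V \<Longrightarrow> t v \<ge> 0" "\<And>v. v \<in> \<phi> ` X \<Longrightarrow> t v = 0"
    "\<And>u v. (u,v) \<in> A \<Longrightarrow> \<not> is_reticulation A v \<Longrightarrow> t u > t v"
    "\<And>p v. (p,v) \<in> A \<Longrightarrow> is_reticulation A v \<Longrightarrow> t p = t v"
proof -
  show "\<And>v. v \<in> V \<Longrightarrow> t v \<ge> 0" "\<And>v. v \<in> \<phi> ` X \<Longrightarrow> t v = 0" using ts by (auto simp: time_stamp_def)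
  show "\<And>u v. (u,v) \<in> A \<Longrightarrow> \<not> is_reticulation A v \<Longrightarrow> t u > t v" using ts by (auto simp: time_stamp_def)
  show "\<And>p v. (p,v) \<in> A \<Longrightarrow> is_reticulation A v \<Longrightarrow> t p = t v"
    using ts AV unfolding time_stamp_def by blast
qed

lemma ts_mono:
  assumes ts: "time_stamp X V A \<phi> t" and ab: "(a,b) \<in> A\<^sup>*"
  shows "t b \<le> t a"
  using ab
proof (induction rule: rtrancl_induct)
  case (step b c)
  have "t c \<le> t b"
  proof (cases "is_reticulation A c")
    case True then show ?thesis using ts_facts(4)[OF ts step(2)] by simp
  next
    case False then show ?thesis using ts_facts(3)[OF ts step(2)] by simp
  qed
  then show ?case using step(3) by simp
qed simp

lemma fwd_c1:
  assumes ts: "time_stamp X V A \<phi> t" and uv: "(u,v) \<in> A" and r: "is_reticulation A v"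
    and cyc: "retic_cycle A P P'"
  shows "P \<noteq> [u,v]"
proof
  assume P: "P = [u,v]"
  have uv': "u \<noteq> v" using uv acyc by (auto simp: acyclic_def)
  have cP': "hd P' = u" "last P' = v" "P' \<noteq> [u,v]" "dpath A P'"
    using cyc P by (auto simp: retic_cycle_def)
  then have ne: "P' \<noteq> []" by (simp add: dpath_def)
  then obtain T where T: "P' = u # T" using cP'(1) by (cases P') auto
  have "T \<noteq> []" using T cP'(2) uv' by auto
  then obtain y T' where yT: "T = y # T'" by (cases T) auto
  have dist: "distinct P'" using cP'(4) by (simp add: dpath_def)
  have yv: "y \<noteq> v"
  proof
    assume "y = v"
    show False
    proof (cases "T' = []")
      case True then show False using T yT cP'(3) \<open>y = v\<close> by simp
    next
      case False
      then have "last T' = v" using T yT cP'(2) by simp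
      moreover have "last T' \<in> set T'" using False by simp
      ultimately show False using dist T yT \<open>y = v\<close> by auto
    qed
  qed
  have arc: "(u,y) \<in> path_arcs P'" using T yT by simp
  have cyc': "retic_cycle A P' P" using retic_cycle_sym[OF cyc] .
  have nr: "\<not> is_reticulation A y" using NR[OF cyc' arc] yv cP'(2) by simp
  have uy: "(u,y) \<in> A" using arc cP'(4) path_arcs_A[of A P'] by (auto simp: dpath_def)
  have "(y, last P') \<in> A\<^sup>*" using walk_reach[of A P' y] cP'(4) T yT by (auto simp: dpath_def)
  then have "t v \<le> t y" using ts_mono[OF ts] cP'(2) by simp
  moreover have "t y < t u" using ts_facts(3)[OF ts uy nr] .
  moreover have "t u = t v" using ts_facts(4)[OF ts uv r] .
  ultimately show False by simp
qed

lemma fwd_condc: "time_stamp X V A \<phi> t \<Longrightarrow> condc A"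
  unfolding condc_def using fwd_c1 retic_cycle_sym by blast

lemma forward:
  assumes ts: "time_stamp X V A \<phi> t" and uV: "u \<in> V"
  shows "(u \<in> \<phi> ` X \<longrightarrow>
         is_leaf A u \<or> (\<exists>v. (u, v) \<in> A \<and> is_reticulation A v \<and> is_leaf A v))"
    and "(outdeg A u \<ge> 2 \<longrightarrow> \<not> (\<exists>v. (u, v) \<in> A \<and> is_reticulation A v \<and> is_leaf A v))"
proof -
  have c: "condc A" using fwd_condc[OF ts] .
  show "u \<in> \<phi> ` X \<longrightarrow> is_leaf A u \<or> (\<exists>v. (u, v) \<in> A \<and> is_reticulation A v \<and> is_leaf A v)"
  proof (intro impI)
    assume ul: "u \<in> \<phi> ` X"
    have tu: "t u = 0" using ts_facts(2)[OF ts ul] .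
    show "is_leaf A u \<or> (\<exists>v. (u, v) \<in> A \<and> is_reticulation A v \<and> is_leaf A v)"
    proof (cases "is_leaf A u")
      case False
      then obtain v where uv: "(u,v) \<in> A" using leaf_iff by blast
      have vV: "v \<in> V" using uv AV by auto
      have rv: "is_reticulation A v"
      proof (rule ccontr)
        assume "\<not> is_reticulation A v"
        then have "t v < t u" using ts_facts(3)[OF ts uv] by simp
        then show False using tu ts_facts(1)[OF ts vV] by simp
      qed
      have tv: "t v = 0" using ts_facts(4)[OF ts uv rv] tu by simp
      have "is_leaf A v"
      proof (rule ccontr)
        assume "\<not> is_leaf A v"
        then obtain w where vw: "(v,w) \<in> A" using leaf_iff by blast
        have wV: "w \<in> V" using vw AV by auto
        have rw: "is_reticulation A w"
        proof (rule ccontr)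
          assume "\<not> is_reticulation A w"
          then have "t w < t v" using ts_facts(3)[OF ts vw] by simp
          then show False using tv ts_facts(1)[OF ts wV] by simp
        qed
        then show False using S1[OF c rw vw] rv by simp
      qed
      then show ?thesis using uv rv by blast
    qed simp
  qed
  show "outdeg A u \<ge> 2 \<longrightarrow> \<not> (\<exists>v. (u, v) \<in> A \<and> is_reticulation A v \<and> is_leaf A v)"
  proof (intro impI notI)
    assume o: "outdeg A u \<ge> 2" and "\<exists>v. (u, v) \<in> A \<and> is_reticulation A v \<and> is_leaf A v"
    then obtain v where v: "(u,v) \<in> A" "is_reticulation A v" "is_leaf A v" by blast
    have vV: "v \<in> V" using v AV by auto
    have tv: "t v = 0" using ts_facts(2)[OF ts leaf_lab[OF vV v(3)]] .
    have tu: "t u = 0" using ts_facts(4)[OF ts v(1,2)] tv by simp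
    obtain w where w: "w \<noteq> v" "(u,w) \<in> A" using outdeg2_other[OF o] by blast
    have wV: "w \<in> V" using w AV by auto
    show False
    proof (cases "is_reticulation A w")
      case True then show False using S2[OF c v(2) True v(1) w(2)] w(1) by simp
    next
      case False
      then have "t w < t u" using ts_facts(3)[OF ts w(2)] by simp
      then show False using tu ts_facts(1)[OF ts wV] by simp
    qed
  qed
qed

end

theorem mainTheorem1:
  fixes X :: "'x set" and V :: "'v set" and A :: "('v \<times> 'v) set" and \<phi> :: "'x \<Rightarrow> 'v"
  assumes "rooted_cactus X V A \<phi>"
  shows "temporal X V A \<phi> \<longleftrightarrow>
    (\<forall>u\<in>V.
      \<comment> \<open>(a)\<close>
      (u \<in> \<phi> ` X \<longrightarrow>
         is_leaf A u \<or> (\<exists>v. (u, v) \<in> A \<and> is_reticulation A v \<and> is_leaf A v)) \<and>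
      \<comment> \<open>(b)\<close>
      (outdeg A u \<ge> 2 \<longrightarrow>
         \<not> (\<exists>v. (u, v) \<in> A \<and> is_reticulation A v \<and> is_leaf A v)) \<and>
      \<comment> \<open>(c)\<close>
      (\<forall>v P P'. (u, v) \<in> A \<and> is_reticulation A v \<and> retic_cycle A P P' \<and>
         v \<in> set P \<union> set P' \<longrightarrow> P \<noteq> [u, v] \<and> P' \<noteq> [u, v]))"
proof -
  interpret cac X V A \<phi> by unfold_locales (rule assms)
  show ?thesis
  proof
    assume "temporal X V A \<phi>"
    then obtain t where ts: "time_stamp X V A \<phi> t" by (auto simp: temporal_def)
    have c: "condc A" using fwd_condc[OF ts] .
    show "(\<forall>u\<in>V.
      (u \<in> \<phi> ` X \<longrightarrow>
         is_leaf A u \<or> (\<exists>v. (u, v) \<in> A \<and> is_reticulation A v \<and> is_leaf A v)) \<and>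
      (outdeg A u \<ge> 2 \<longrightarrow>
         \<not> (\<exists>v. (u, v) \<in> A \<and> is_reticulation A v \<and> is_leaf A v)) \<and>
      (\<forall>v P P'. (u, v) \<in> A \<and> is_reticulation A v \<and> retic_cycle A P P' \<and>
         v \<in> set P \<union> set P' \<longrightarrow> P \<noteq> [u, v] \<and> P' \<noteq> [u, v]))"
    proof (intro ballI conjI)
      fix u assume uV: "u \<in> V"
      show "u \<in> \<phi> ` X \<longrightarrow> is_leaf A u \<or> (\<exists>v. (u, v) \<in> A \<and> is_reticulation A v \<and> is_leaf A v)"
        using forward(1)[OF ts uV] .
      show "outdeg A u \<ge> 2 \<longrightarrow> \<not> (\<exists>v. (u, v) \<in> A \<and> is_reticulation A v \<and> is_leaf A v)"
        using forward(2)[OF ts uV] .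
      show "\<forall>v P P'. (u, v) \<in> A \<and> is_reticulation A v \<and> retic_cycle A P P' \<and>
         v \<in> set P \<union> set P' \<longrightarrow> P \<noteq> [u, v] \<and> P' \<noteq> [u, v]"
        using c unfolding condc_def by blast
    qed
  next
    assume H: "(\<forall>u\<in>V.
      (u \<in> \<phi> ` X \<longrightarrow>
         is_leaf A u \<or> (\<exists>v. (u, v) \<in> A \<and> is_reticulation A v \<and> is_leaf A v)) \<and>
      (outdeg A u \<ge> 2 \<longrightarrow>
         \<not> (\<exists>v. (u, v) \<in> A \<and> is_reticulation A v \<and> is_leaf A v)) \<and>
      (\<forall>v P P'. (u, v) \<in> A \<and> is_reticulation A v \<and> retic_cycle A P P' \<and>
         v \<in> set P \<union> set P' \<longrightarrow> P \<noteq> [u, v] \<and> P' \<noteq> [u, v]))"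
    have c: "condc A" unfolding condc_def
    proof (intro allI impI)
      fix u v P P'
      assume a: "(u, v) \<in> A \<and> is_reticulation A v \<and> retic_cycle A P P' \<and> v \<in> set P \<union> set P'"
      then have "u \<in> V" using AV by auto
      then show "P \<noteq> [u, v] \<and> P' \<noteq> [u, v]" using H a by blast
    qed
    show "temporal X V A \<phi>"
    proof (rule reverse[OF c])
      fix u assume "u \<in> V" "u \<in> \<phi> ` X"
      then show "is_leaf A u \<or> (\<exists>v. (u, v) \<in> A \<and> is_reticulation A v \<and> is_leaf A v)"
        using H by blast
    next
      fix u assume "u \<in> V" "outdeg A u \<ge> 2"
      then show "\<not> (\<exists>v. (u, v) \<in> A \<and> is_reticulation A v \<and> is_leaf A v)"
        using H by blast
    qed
  qed
qed



end
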